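(* Let $k\ge2$, $d>0$ with $2d/k\le1$, and $t\ge1$. Let $T$ be a Galton–Watson tree of depth $t$ rooted at $u$ with $\mathrm{Poisson}(d)$ offspring distribution, let $R$ be the set of vertices of $T$ at depth $t$, and, independently of $T$, assign i.i.d. uniform labels $X_v\in[k]$ to the vertices of $T$; for every edge $(i,j)$ of $T$ let $Y_{ij}=\mathbf 1\{X_i=X_j\}$. Let $P^{(t)}_x$ denote the joint law of $(T,X_R,\{Y_e\}_{e\in E(T)})$ conditioned on $X_u=x$. Then $$\max_{x,x'\in[k]}d_{\mathrm{TV}}\bigl(P^{(t)}_x,P^{(t)}_{x'}\bigr)\to0\qquad\text{as }t\to\infty.$$
   Context: $d_{\mathrm{TV}}$ denotes total variation distance; $[k]=\{1,\dots,k\}$. *)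

theory Defs
  imports "HOL-Probability.Probability"
begin

datatype tree = Node "tree list"

primrec gw_tree :: "real \<Rightarrow> nat \<Rightarrow> tree pmf" where
  "gw_tree d 0 = return_pmf (Node [])"
| "gw_tree d (Suc t) =
     do { n \<leftarrow> poisson_pmf d; cs \<leftarrow> replicate_pmf n (gw_tree d t); return_pmf (Node cs) }"

datatype ltree = LNode nat "ltree list"

fun lroot :: "ltree \<Rightarrow> nat" where
  "lroot (LNode x _) = x"

primrec seq_pmf :: "'a pmf list \<Rightarrow> 'a list pmf" where
  "seq_pmf [] = return_pmf []"
| "seq_pmf (p # ps) = do { x \<leftarrow> p; xs \<leftarrow> seq_pmf ps; return_pmf (x # xs) }"

fun label_pmf :: "nat \<Rightarrow> nat \<Rightarrow> tree \<Rightarrow> ltree pmf" where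
  "label_pmf k x (Node cs) =
     do { ls \<leftarrow> seq_pmf (map (\<lambda>c. do { y \<leftarrow> pmf_of_set {1..k}; label_pmf k y c }) cs);
          return_pmf (LNode x ls) }"

text \<open>Observations: the tree T, the labels X_R of the depth-t vertices, and the
  edge indicators Y_ij = [X_i = X_j].  An internal (depth < t) vertex is
  recorded as ONode with the list of (edge indicator, child subtree); a vertex
  at depth t is recorded as OLeaf with its label.  This encodes the triple
  (T, X_R, Y) bijectively.\<close>
datatype obs = OLeaf nat | ONode "(bool \<times> obs) list"

fun observe :: "nat \<Rightarrow> ltree \<Rightarrow> obs" where
  "observe 0 (LNode x cs) = OLeaf x"
| "observe (Suc t) (LNode x cs) = ONode (map (\<lambda>c. (lroot c = x, observe t c)) cs)"

text \<open>P_x^(t): joint law of (T, X_R, Y) given X_u = x (X_u is independent of T and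
  of the other labels, so conditioning amounts to fixing the root label).\<close>
definition P_obs :: "real \<Rightarrow> nat \<Rightarrow> nat \<Rightarrow> nat \<Rightarrow> obs pmf" where
  "P_obs d k t x =
     do { T \<leftarrow> gw_tree d t; L \<leftarrow> label_pmf k x T; return_pmf (observe t L) }"

definition tv_dist :: "'a pmf \<Rightarrow> 'a pmf \<Rightarrow> real" where
  "tv_dist p q = (SUP A. \<bar>measure_pmf.prob p A - measure_pmf.prob q A\<bar>)"

end

theory Submission
  imports Defs
begin


definition coupled :: "'a pmf \<Rightarrow> 'a pmf \<Rightarrow> real \<Rightarrow> bool" where
  "coupled p q e \<longleftrightarrow> (\<exists>c. map_pmf fst c = p \<and> map_pmf snd c = q \<and>
      measure_pmf.prob c {z. fst z \<noteq> snd z} \<le> e)"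

lemma coupled_mono: "coupled p q e \<Longrightarrow> e \<le> e' \<Longrightarrow> coupled p q e'"
  unfolding coupled_def by force

lemma coupled_refl: "coupled p p 0"
  unfolding coupled_def
  by (rule exI[of _ "map_pmf (\<lambda>a. (a,a)) p"]) (simp add: map_pmf_comp)

lemma coupled_triv: "coupled p q 1"
  unfolding coupled_def
  by (rule exI[of _ "pair_pmf p q"]) (simp add: map_fst_pair_pmf map_snd_pair_pmf)

lemma coupled_map: "coupled p q e \<Longrightarrow> coupled (map_pmf h p) (map_pmf h q) e"
proof -
  assume "coupled p q e"
  then obtain c where c: "map_pmf fst c = p" "map_pmf snd c = q"
     "measure_pmf.prob c {z. fst z \<noteq> snd z} \<le> e" unfolding coupled_def by blast
  let ?c = "map_pmf (\<lambda>(a,b). (h a, h b)) c"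
  have "measure_pmf.prob ?c {z. fst z \<noteq> snd z} = measure_pmf.prob c {z. h (fst z) \<noteq> h (snd z)}"
    by (simp add: case_prod_beta vimage_def)
  also have "\<dots> \<le> measure_pmf.prob c {z. fst z \<noteq> snd z}"
    by (rule measure_pmf.finite_measure_mono) auto
  finally show ?thesis unfolding coupled_def using c
    by (intro exI[of _ ?c]) (auto simp: map_pmf_comp case_prod_beta)
qed

lemma coupled_tv: assumes "coupled p q e" shows "tv_dist p q \<le> e"
proof -
  obtain c where c: "map_pmf fst c = p" "map_pmf snd c = q"
     "measure_pmf.prob c {z. fst z \<noteq> snd z} \<le> e" using assms unfolding coupled_def by blast
  have "\<bar>measure_pmf.prob p A - measure_pmf.prob q A\<bar> \<le> e" for A
  proof -
    have pA: "measure_pmf.prob p A = measure_pmf.prob c {z. fst z \<in> A}"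
      using c(1) by (auto simp: vimage_def)
    have qA: "measure_pmf.prob q A = measure_pmf.prob c {z. snd z \<in> A}"
      using c(2) by (auto simp: vimage_def)
    have 1: "measure_pmf.prob c {z. fst z \<in> A} \<le> measure_pmf.prob c {z. snd z \<in> A} + measure_pmf.prob c {z. fst z \<noteq> snd z}"
    proof -
      have "measure_pmf.prob c {z. fst z \<in> A} \<le> measure_pmf.prob c ({z. snd z \<in> A} \<union> {z. fst z \<noteq> snd z})"
        by (rule measure_pmf.finite_measure_mono) auto
      also have "\<dots> \<le> measure_pmf.prob c {z. snd z \<in> A} + measure_pmf.prob c {z. fst z \<noteq> snd z}"
        by (rule measure_Un_le) auto
      finally show ?thesis .
    qed
    have 2: "measure_pmf.prob c {z. snd z \<in> A} \<le> measure_pmf.prob c {z. fst z \<in> A} + measure_pmf.prob c {z. fst z \<noteq> snd z}"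
    proof -
      have "measure_pmf.prob c {z. snd z \<in> A} \<le> measure_pmf.prob c ({z. fst z \<in> A} \<union> {z. fst z \<noteq> snd z})"
        by (rule measure_pmf.finite_measure_mono) auto
      also have "\<dots> \<le> measure_pmf.prob c {z. fst z \<in> A} + measure_pmf.prob c {z. fst z \<noteq> snd z}"
        by (rule measure_Un_le) auto
      finally show ?thesis .
    qed
    show ?thesis using 1 2 c(3) pA qA by linarith
  qed
  then show ?thesis unfolding tv_dist_def by (intro cSUP_least) auto
qed

lemma tv_nonneg: "0 \<le> tv_dist p q"
proof -
  have bdd: "bdd_above (range (\<lambda>A. \<bar>measure_pmf.prob p A - measure_pmf.prob q A\<bar>))"
  proof (rule bdd_aboveI[of _ 1])
    fix x assume "x \<in> range (\<lambda>A. \<bar>measure_pmf.prob p A - measure_pmf.prob q A\<bar>)"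
    then obtain A where "x = \<bar>measure_pmf.prob p A - measure_pmf.prob q A\<bar>" by blast
    moreover have "measure_pmf.prob p A \<le> 1" "measure_pmf.prob q A \<le> 1" "0 \<le> measure_pmf.prob p A" "0 \<le> measure_pmf.prob q A"
      by auto
    ultimately show "x \<le> 1" by linarith
  qed
  have "0 \<le> \<bar>measure_pmf.prob p {} - measure_pmf.prob q {}\<bar>" by simp
  also have "\<dots> \<le> tv_dist p q" unfolding tv_dist_def by (rule cSUP_upper[OF _ bdd]) auto
  finally show ?thesis .
qed

lemma coupled_bind:
  assumes "\<And>y. y \<in> set_pmf p \<Longrightarrow> coupled (f y) (g y) (e y)"
    and "\<And>y. 0 \<le> e y"
    and "(\<integral>\<^sup>+ y. ennreal (e y) \<partial>measure_pmf p) \<le> ennreal \<epsilon>" and "0 \<le> \<epsilon>"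
  shows "coupled (bind_pmf p f) (bind_pmf p g) \<epsilon>"
proof -
  define C where "C y = (SOME c. map_pmf fst c = f y \<and> map_pmf snd c = g y \<and>
      measure_pmf.prob c {z. fst z \<noteq> snd z} \<le> e y)" for y
  have C: "map_pmf fst (C y) = f y \<and> map_pmf snd (C y) = g y \<and>
      measure_pmf.prob (C y) {z. fst z \<noteq> snd z} \<le> e y" if "y \<in> set_pmf p" for y
    unfolding C_def using assms(1)[OF that] unfolding coupled_def by (rule someI_ex)
  let ?c = "bind_pmf p C"
  have m1: "map_pmf fst ?c = bind_pmf p f" unfolding map_bind_pmf
    using C by (intro bind_pmf_cong) auto
  have m2: "map_pmf snd ?c = bind_pmf p g" unfolding map_bind_pmf
    using C by (intro bind_pmf_cong) auto
  have "ennreal (measure_pmf.prob ?c {z. fst z \<noteq> snd z}) = emeasure (measure_pmf ?c) {z. fst z \<noteq> snd z}"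
    by (simp add: measure_pmf.emeasure_eq_measure)
  also have "\<dots> = (\<integral>\<^sup>+ y. emeasure (measure_pmf (C y)) {z. fst z \<noteq> snd z} \<partial>measure_pmf p)"
    by simp
  also have "\<dots> \<le> (\<integral>\<^sup>+ y. ennreal (e y) \<partial>measure_pmf p)"
    using C by (intro nn_integral_mono_AE) (auto simp: AE_measure_pmf_iff measure_pmf.emeasure_eq_measure intro!: ennreal_leI)
  also have "\<dots> \<le> ennreal \<epsilon>" by fact
  finally have "measure_pmf.prob ?c {z. fst z \<noteq> snd z} \<le> \<epsilon>"
    using assms(4) by (simp add: ennreal_le_iff)
  then show ?thesis unfolding coupled_def using m1 m2 by blast
qed



lemma prob_bind_real:
  "measure_pmf.prob (bind_pmf p C) D = measure_pmf.expectation p (\<lambda>y. measure_pmf.prob (C y) D)"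
proof -
  have int: "integrable (measure_pmf p) (\<lambda>y. measure_pmf.prob (C y) D)"
    by (rule measure_pmf.integrable_const_bound[where B=1]) auto
  have "ennreal (measure_pmf.prob (bind_pmf p C) D) = emeasure (measure_pmf (bind_pmf p C)) D"
    by (simp add: measure_pmf.emeasure_eq_measure)
  also have "\<dots> = (\<integral>\<^sup>+ y. emeasure (measure_pmf (C y)) D \<partial>measure_pmf p)"
    by (rule emeasure_bind_pmf)
  also have "\<dots> = (\<integral>\<^sup>+ y. ennreal (measure_pmf.prob (C y) D) \<partial>measure_pmf p)"
    by (simp add: measure_pmf.emeasure_eq_measure)
  also have "\<dots> = ennreal (measure_pmf.expectation p (\<lambda>y. measure_pmf.prob (C y) D))"
    by (rule nn_integral_eq_integral[OF int]) auto
  finally show ?thesis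
    by (subst (asm) ennreal_inj) (auto intro: integral_nonneg_AE)
qed

lemma coupled_cons:
  assumes "coupled p q e1" "coupled P Q e2" "e1 \<le> 1" "e2 \<le> 1"
  shows "coupled (bind_pmf p (\<lambda>x. map_pmf (Cons x) P)) (bind_pmf q (\<lambda>x. map_pmf (Cons x) Q))
     (1 - (1 - e1) * (1 - e2))"
proof -
  obtain c1 where c1: "map_pmf fst c1 = p" "map_pmf snd c1 = q"
     "measure_pmf.prob c1 {z. fst z \<noteq> snd z} \<le> e1" using assms(1) unfolding coupled_def by blast
  obtain c2 where c2: "map_pmf fst c2 = P" "map_pmf snd c2 = Q"
     "measure_pmf.prob c2 {z. fst z \<noteq> snd z} \<le> e2" using assms(2) unfolding coupled_def by blast
  define F where "F z = map_pmf (\<lambda>w. (fst z # fst w, snd z # snd w)) c2" for z :: "'a \<times> 'a"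
  let ?c = "bind_pmf c1 F"
  have m1: "map_pmf fst ?c = bind_pmf p (\<lambda>x. map_pmf (Cons x) P)"
    unfolding c1(1)[symmetric] c2(1)[symmetric] bind_map_pmf map_bind_pmf F_def
    by (simp add: map_pmf_comp)
  have m2: "map_pmf snd ?c = bind_pmf q (\<lambda>x. map_pmf (Cons x) Q)"
    unfolding c1(2)[symmetric] c2(2)[symmetric] bind_map_pmf map_bind_pmf F_def
    by (simp add: map_pmf_comp)
  define r1 where "r1 = measure_pmf.prob c1 {z. fst z \<noteq> snd z}"
  define r2 where "r2 = measure_pmf.prob c2 {z. fst z \<noteq> snd z}"
  have F: "measure_pmf.prob (F z) {z. fst z \<noteq> snd z} = r2 + (1 - r2) * indicator {z. fst z \<noteq> snd z} z" for z
  proof (cases "fst z = snd z")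
    case True
    then show ?thesis unfolding F_def r2_def by (simp add: vimage_def)
  next
    case False
    then show ?thesis unfolding F_def r2_def by (simp add: vimage_def)
  qed
  have "measure_pmf.prob ?c {z. fst z \<noteq> snd z} = measure_pmf.expectation c1 (\<lambda>z. r2 + (1 - r2) * indicator {z. fst z \<noteq> snd z} z)"
    by (simp add: prob_bind_real F)
  also have "\<dots> = r2 + (1 - r2) * r1"
  proof -
    let ?S = "{z. fst z \<noteq> snd z}"
    have "measure_pmf.expectation c1 (\<lambda>z. r2 + (1 - r2) * indicator ?S z) =
       measure_pmf.expectation c1 (\<lambda>z. r2) + measure_pmf.expectation c1 (\<lambda>z. (1 - r2) * indicator ?S z)"
      by (rule Bochner_Integration.integral_add;
          rule measure_pmf.integrable_const_bound[where B="\<bar>r2\<bar> + \<bar>1 - r2\<bar>"]) (auto simp: indicator_def)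
    also have "\<dots> = r2 + (1 - r2) * r1"
      unfolding r1_def by simp
    finally show ?thesis .
  qed
  also have "\<dots> \<le> 1 - (1 - e1) * (1 - e2)"
  proof -
    have "r1 \<le> e1" "r2 \<le> e2" "r1 \<ge> 0" "r2 \<ge> 0" "r1 \<le> 1" "r2 \<le> 1"
      using c1(3) c2(3) unfolding r1_def r2_def by auto
    then have "(1 - e1) * (1 - e2) \<le> (1 - r1) * (1 - r2)"
      using assms(3,4) by (intro mult_mono) auto
    then show ?thesis by (simp add: algebra_simps)
  qed
  finally show ?thesis unfolding coupled_def using m1 m2 by blast
qed

lemma coupled_replicate:
  assumes "coupled p q e" "0 \<le> e" "e \<le> 1"
  shows "coupled (replicate_pmf n p) (replicate_pmf n q) (1 - (1 - e) ^ n)"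
proof (induction n)
  case 0 then show ?case using coupled_refl by simp
next
  case (Suc n)
  have r: "replicate_pmf (Suc n) p = bind_pmf p (\<lambda>x. map_pmf (Cons x) (replicate_pmf n p))" for p :: "'a pmf"
    by (simp add: map_pmf_def)
  have "(1 - e) ^ n \<le> 1" "0 \<le> (1 - e) ^ n" using assms by (auto intro: power_le_one)
  then have "coupled (replicate_pmf (Suc n) p) (replicate_pmf (Suc n) q) (1 - (1 - e) * (1 - (1 - (1 - e) ^ n)))"
    unfolding r using assms Suc by (intro coupled_cons) auto
  then show ?case by simp
qed

lemma poisson_gen:
  assumes "0 < d" "0 \<le> a" "a \<le> (1::real)"
  shows "measure_pmf.expectation (poisson_pmf d) (\<lambda>n. a ^ n) = exp (- d * (1 - a))"
proof -
  have sm: "(\<lambda>n. pmf (poisson_pmf d) n * a ^ n) sums exp (- d * (1 - a))"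
  proof -
    have "(\<lambda>n. exp (-d) * ((d * a) ^ n /\<^sub>R fact n)) sums (exp (-d) * exp (d * a))"
      by (intro sums_mult exp_converges)
    moreover have "exp (-d) * exp (d * a) = exp (- d * (1 - a))"
      by (simp add: mult_exp_exp algebra_simps)
    moreover have "(\<lambda>n. exp (-d) * ((d * a) ^ n /\<^sub>R fact n)) = (\<lambda>n. pmf (poisson_pmf d) n * a ^ n)"
      using assms by (auto simp: power_mult_distrib divide_simps)
    ultimately show ?thesis by simp
  qed
  have int: "integrable (measure_pmf (poisson_pmf d)) (\<lambda>n. a ^ n)"
    by (rule measure_pmf.integrable_const_bound[where B=1]) (use assms in \<open>auto intro: power_le_one\<close>)
  have "ennreal (measure_pmf.expectation (poisson_pmf d) (\<lambda>n. a ^ n)) = (\<integral>\<^sup>+ n. ennreal (a ^ n) \<partial>measure_pmf (poisson_pmf d))"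
    by (rule nn_integral_eq_integral[OF int, symmetric]) (use assms in auto)
  also have "\<dots> = (\<integral>\<^sup>+ n. ennreal (pmf (poisson_pmf d) n) * ennreal (a ^ n) \<partial>count_space UNIV)"
    by (rule nn_integral_measure_pmf)
  also have "\<dots> = (\<Sum>n. ennreal (pmf (poisson_pmf d) n) * ennreal (a ^ n))"
    by (rule nn_integral_count_space_nat)
  also have "\<dots> = (\<Sum>n. ennreal (pmf (poisson_pmf d) n * a ^ n))"
    using assms by (intro arg_cong[where f=suminf] ext ennreal_mult[symmetric]) auto
  also have "\<dots> = ennreal (exp (- d * (1 - a)))"
    using sm assms by (intro suminf_ennreal2[of "\<lambda>n. pmf (poisson_pmf d) n * a ^ n", THEN trans])
       (auto simp: sums_iff)
  finally show ?thesis
    using assms by (subst (asm) ennreal_inj) (auto intro: integral_nonneg_AE)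
qed



lemma map_seq_pmf: "map_pmf (map h) (seq_pmf ps) = seq_pmf (map (map_pmf h) ps)"
proof (induction ps)
  case Nil then show ?case by simp
next
  case (Cons p ps)
  show ?case by (simp add: Cons.IH[symmetric] bind_map_pmf map_bind_pmf)
qed

lemma replicate_seq:
  "bind_pmf (replicate_pmf n p) (\<lambda>cs. seq_pmf (map f cs)) = replicate_pmf n (bind_pmf p f)"
proof (induction n)
  case 0 then show ?case by (simp add: bind_return_pmf)
next
  case (Suc n)
  have "bind_pmf (replicate_pmf (Suc n) p) (\<lambda>cs. seq_pmf (map f cs))
     = bind_pmf p (\<lambda>c. bind_pmf (replicate_pmf n p) (\<lambda>cs. bind_pmf (f c) (\<lambda>x. bind_pmf (seq_pmf (map f cs)) (\<lambda>xs. return_pmf (x#xs)))))"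
    by (simp add: bind_assoc_pmf bind_return_pmf)
  also have "\<dots> = bind_pmf p (\<lambda>c. bind_pmf (f c) (\<lambda>x. bind_pmf (bind_pmf (replicate_pmf n p) (\<lambda>cs. seq_pmf (map f cs))) (\<lambda>xs. return_pmf (x#xs))))"
    by (simp add: bind_assoc_pmf bind_commute_pmf[of "replicate_pmf n p"])
  also have "\<dots> = replicate_pmf (Suc n) (bind_pmf p f)"
    by (simp add: Suc bind_assoc_pmf)
  finally show ?case .
qed

lemma lroot_label: "l \<in> set_pmf (label_pmf k y c) \<Longrightarrow> lroot l = y"
  by (cases c) auto

definition Q :: "real \<Rightarrow> nat \<Rightarrow> nat \<Rightarrow> nat \<Rightarrow> (bool \<times> obs) pmf" where
  "Q d k t x = bind_pmf (pmf_of_set {1..k}) (\<lambda>y. map_pmf (\<lambda>ob. (y = x, ob)) (P_obs d k t y))"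

lemma P_obs_0: "P_obs d k 0 x = return_pmf (OLeaf x)"
  by (simp add: P_obs_def bind_return_pmf)

lemma P_obs_Suc: "P_obs d k (Suc t) x =
   bind_pmf (poisson_pmf d) (\<lambda>n. map_pmf ONode (replicate_pmf n (Q d k t x)))"
proof -
  define h where "h l = (lroot l = x, observe t l)" for l
  define g where "g c = map_pmf h (bind_pmf (pmf_of_set {1..k}) (\<lambda>y. label_pmf k y c))" for c
  have 1: "bind_pmf (label_pmf k x (Node cs)) (\<lambda>L. return_pmf (observe (Suc t) L))
     = map_pmf ONode (seq_pmf (map g cs))" for cs
  proof -
    have "map_pmf ONode (seq_pmf (map g cs)) = map_pmf ONode (map_pmf (map h) (seq_pmf (map (\<lambda>c. bind_pmf (pmf_of_set {1..k}) (\<lambda>y. label_pmf k y c)) cs)))"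
      unfolding map_seq_pmf by (simp add: g_def[abs_def] o_def)
    then show ?thesis
      by (simp add: bind_assoc_pmf bind_return_pmf map_pmf_comp h_def[abs_def] map_pmf_def[symmetric])
  qed
  have 2: "bind_pmf (gw_tree d t) g = Q d k t x"
  proof -
    have "bind_pmf (gw_tree d t) g = bind_pmf (gw_tree d t) (\<lambda>c. bind_pmf (pmf_of_set {1..k}) (\<lambda>y. map_pmf (\<lambda>l. (y = x, observe t l)) (label_pmf k y c)))"
      unfolding g_def map_bind_pmf h_def
      by (intro bind_pmf_cong refl map_pmf_cong) (auto dest: lroot_label)
    also have "\<dots> = Q d k t x"
      unfolding Q_def P_obs_def
      by (subst bind_commute_pmf) (simp add: map_bind_pmf map_pmf_comp map_pmf_def bind_assoc_pmf bind_return_pmf)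
    finally show ?thesis .
  qed
  have "P_obs d k (Suc t) x = bind_pmf (poisson_pmf d) (\<lambda>n. bind_pmf (replicate_pmf n (gw_tree d t))
      (\<lambda>cs. bind_pmf (label_pmf k x (Node cs)) (\<lambda>L. return_pmf (observe (Suc t) L))))"
    unfolding P_obs_def by (simp only: gw_tree.simps bind_assoc_pmf bind_return_pmf)
  also have "\<dots> = bind_pmf (poisson_pmf d) (\<lambda>n. bind_pmf (replicate_pmf n (gw_tree d t))
      (\<lambda>cs. map_pmf ONode (seq_pmf (map g cs))))"
    by (simp only: 1)
  also have "\<dots> = bind_pmf (poisson_pmf d) (\<lambda>n. map_pmf ONode (bind_pmf (replicate_pmf n (gw_tree d t))
      (\<lambda>cs. seq_pmf (map g cs))))"
    by (simp only: map_bind_pmf)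
  also have "\<dots> = bind_pmf (poisson_pmf d) (\<lambda>n. map_pmf ONode (replicate_pmf n (Q d k t x)))"
    by (simp only: replicate_seq 2)
  finally show ?thesis .
qed


lemma coupled_bind_real:
  assumes "\<And>y. y \<in> set_pmf p \<Longrightarrow> coupled (f y) (g y) (e y)"
    and "\<And>y. 0 \<le> e y" "\<And>y. e y \<le> 1"
    and "measure_pmf.expectation p e \<le> \<epsilon>"
  shows "coupled (bind_pmf p f) (bind_pmf p g) \<epsilon>"
proof -
  have int: "integrable (measure_pmf p) e"
    by (rule measure_pmf.integrable_const_bound[where B=1]) (use assms in auto)
  have "0 \<le> measure_pmf.expectation p e" using assms(2) by (auto intro: integral_nonneg_AE)
  then have e0: "0 \<le> \<epsilon>" using assms(4) by linarith
  have "(\<integral>\<^sup>+ y. ennreal (e y) \<partial>measure_pmf p) = ennreal (measure_pmf.expectation p e)"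
    by (rule nn_integral_eq_integral[OF int]) (use assms in auto)
  also have "\<dots> \<le> ennreal \<epsilon>" using assms(4) by (rule ennreal_leI)
  finally show ?thesis using assms(1,2) e0 by (intro coupled_bind) auto
qed

lemma coupled_Q:
  assumes x: "x \<in> {1..k}" "x' \<in> {1..k}"
    and IH: "\<And>y y'. y \<in> {1..k} \<Longrightarrow> y' \<in> {1..k} \<Longrightarrow> coupled (P_obs d k t y) (P_obs d k t y') \<epsilon>"
    and e: "0 \<le> \<epsilon>" "\<epsilon> \<le> 1"
  shows "coupled (Q d k t x) (Q d k t x') (2 * \<epsilon> / k)"
proof -
  define \<sigma> where "\<sigma> y = (if y = x then x' else if y = x' then x else y)" for y
  have inj: "inj_on \<sigma> {1..k}" unfolding \<sigma>_def inj_on_def by auto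
  have im: "\<sigma> ` {1..k} = {1..k}"
  proof
    show "\<sigma> ` {1..k} \<subseteq> {1..k}" using x unfolding \<sigma>_def by auto
    show "{1..k} \<subseteq> \<sigma> ` {1..k}"
    proof
      fix y assume y: "y \<in> {1..k}"
      have "\<sigma> (\<sigma> y) = y" unfolding \<sigma>_def by auto
      moreover have "\<sigma> y \<in> {1..k}" using x y unfolding \<sigma>_def by auto
      ultimately show "y \<in> \<sigma> ` {1..k}" by (metis imageI)
    qed
  qed
  have k: "k \<ge> 1" using x by auto
  have U: "pmf_of_set {1..k} = map_pmf \<sigma> (pmf_of_set {1..k})"
    using map_pmf_of_set_inj[OF inj] im k by simp
  have Q': "Q d k t x' = bind_pmf (pmf_of_set {1..k}) (\<lambda>y. map_pmf (\<lambda>ob. (y = x, ob)) (P_obs d k t (\<sigma> y)))"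
  proof -
    have "Q d k t x' = bind_pmf (pmf_of_set {1..k}) (\<lambda>y. map_pmf (\<lambda>ob. (\<sigma> y = x', ob)) (P_obs d k t (\<sigma> y)))"
      unfolding Q_def by (subst U) (simp add: bind_map_pmf)
    also have "\<dots> = bind_pmf (pmf_of_set {1..k}) (\<lambda>y. map_pmf (\<lambda>ob. (y = x, ob)) (P_obs d k t (\<sigma> y)))"
    proof -
      have "(\<sigma> y = x') = (y = x)" for y unfolding \<sigma>_def by auto
      then show ?thesis by simp
    qed
    finally show ?thesis .
  qed
  define e where "e y = (if y \<in> {x, x'} then \<epsilon> else 0)" for y
  show ?thesis
    unfolding Q' unfolding Q_def
  proof (rule coupled_bind_real[where e = e])
    fix y assume "y \<in> set_pmf (pmf_of_set {1..k})"
    then have y: "y \<in> {1..k}" using k by simp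
    show "coupled (map_pmf (\<lambda>ob. (y = x, ob)) (P_obs d k t y)) (map_pmf (\<lambda>ob. (y = x, ob)) (P_obs d k t (\<sigma> y))) (e y)"
    proof (rule coupled_map)
      show "coupled (P_obs d k t y) (P_obs d k t (\<sigma> y)) (e y)"
      proof (cases "y \<in> {x, x'}")
        case True
        have sy: "\<sigma> y \<in> {1..k}" using im y by blast
        show ?thesis unfolding e_def using IH[OF y sy] True by simp
      next
        case False
        then have "\<sigma> y = y" unfolding \<sigma>_def by auto
        then show ?thesis unfolding e_def using False coupled_refl by simp
      qed
    qed
  next
    show "0 \<le> e y" "e y \<le> 1" for y unfolding e_def using e by auto
  next
    have "measure_pmf.expectation (pmf_of_set {1..k}) e = sum e {1..k} / k"
      using k by (subst integral_pmf_of_set) auto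
    also have "sum e {1..k} = (\<Sum>y\<in>{1..k} \<inter> {x, x'}. \<epsilon>)"
    proof -
      have "(\<Sum>y\<in>{1..k} \<inter> {x, x'}. \<epsilon>) = sum e {1..k}"
        unfolding e_def by (rule sum.inter_restrict) simp
      then show ?thesis by simp
    qed
    also have "\<dots> = card ({1..k} \<inter> {x, x'}) * \<epsilon>" by simp
    also have "\<dots> \<le> 2 * \<epsilon>"
    proof -
      have "card ({1..k} \<inter> {x, x'}) \<le> card {x, x'}" by (intro card_mono) auto
      also have "\<dots> \<le> 2" by (simp add: card_insert_if)
      finally show ?thesis using e by (intro mult_right_mono) auto
    qed
    finally show "measure_pmf.expectation (pmf_of_set {1..k}) e \<le> 2 * \<epsilon> / k"
      using k by (simp add: divide_right_mono)
  qed
qed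


primrec sq :: "real \<Rightarrow> nat \<Rightarrow> nat \<Rightarrow> real" where
  "sq d k 0 = 1"
| "sq d k (Suc t) = 1 - exp (- d * (2 * sq d k t / k))"

lemma sq_bounds:
  assumes "d > 0" "k \<ge> 2"
  shows "0 \<le> sq d k t \<and> sq d k t \<le> 1"
proof (induction t)
  case 0 then show ?case by simp
next
  case (Suc t)
  have "0 \<le> d * (2 * sq d k t / k)" using Suc assms by auto
  then have "exp (- d * (2 * sq d k t / k)) \<le> 1" by simp
  moreover have "exp (- d * (2 * sq d k t / k)) > 0" by simp
  ultimately show ?case by simp
qed

lemma main_coupled:
  assumes "d > 0" "k \<ge> 2"
  shows "x \<in> {1..k} \<Longrightarrow> x' \<in> {1..k} \<Longrightarrow> coupled (P_obs d k t x) (P_obs d k t x') (sq d k t)"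
proof (induction t arbitrary: x x')
  case 0 then show ?case using coupled_triv by simp
next
  case (Suc t)
  define \<epsilon> where "\<epsilon> = 2 * sq d k t / k"
  have sb: "0 \<le> sq d k t" "sq d k t \<le> 1" using sq_bounds[OF assms] by auto
  have e0: "0 \<le> \<epsilon>" unfolding \<epsilon>_def using sb by auto
  have e1: "\<epsilon> \<le> 1"
  proof -
    have "2 * sq d k t \<le> 2" using sb by simp
    also have "\<dots> \<le> real k" using assms by simp
    finally show ?thesis unfolding \<epsilon>_def using assms by (simp add: divide_le_eq)
  qed
  have cQ: "coupled (Q d k t x) (Q d k t x') \<epsilon>"
    unfolding \<epsilon>_def using Suc sb by (intro coupled_Q) auto
  have pw: "0 \<le> (1 - \<epsilon>) ^ n" "(1 - \<epsilon>) ^ n \<le> 1" for n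
    using e0 e1 by (auto intro: power_le_one)
  show ?case
    unfolding P_obs_Suc
  proof (rule coupled_bind_real[where e = "\<lambda>n. 1 - (1 - \<epsilon>) ^ n"])
    show "coupled (map_pmf ONode (replicate_pmf n (Q d k t x))) (map_pmf ONode (replicate_pmf n (Q d k t x'))) (1 - (1 - \<epsilon>) ^ n)" for n
      by (intro coupled_map coupled_replicate cQ e0 e1)
    show "0 \<le> 1 - (1 - \<epsilon>) ^ n" "1 - (1 - \<epsilon>) ^ n \<le> 1" for n using pw[of n] by auto
    have int: "integrable (measure_pmf (poisson_pmf d)) (\<lambda>n. (1 - \<epsilon>) ^ n)"
      by (rule measure_pmf.integrable_const_bound[where B=1]) (use pw in auto)
    have "measure_pmf.expectation (poisson_pmf d) (\<lambda>n. 1 - (1 - \<epsilon>) ^ n)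
        = 1 - measure_pmf.expectation (poisson_pmf d) (\<lambda>n. (1 - \<epsilon>) ^ n)"
      using int by (subst Bochner_Integration.integral_diff) auto
    also have "\<dots> = 1 - exp (- d * (1 - (1 - \<epsilon>)))"
      using assms e0 e1 by (subst poisson_gen) auto
    also have "\<dots> = sq d k (Suc t)" unfolding \<epsilon>_def by simp
    finally show "measure_pmf.expectation (poisson_pmf d) (\<lambda>n. 1 - (1 - \<epsilon>) ^ n) \<le> sq d k (Suc t)"
      by simp
  qed
qed

lemma sq_tendsto:
  assumes "d > 0" "k \<ge> 2" "2 * d / real k \<le> 1"
  shows "sq d k \<longlonglongrightarrow> 0"
proof -
  define m where "m = 2 * d / real k"
  have m: "0 < m" "m \<le> 1" using assms unfolding m_def by auto
  have rec: "sq d k (Suc t) = 1 - exp (- (m * sq d k t))" for t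
    unfolding m_def by (simp add: algebra_simps)
  have sb: "0 \<le> sq d k t" "sq d k t \<le> 1" for t using sq_bounds[OF assms(1,2)] by auto
  have dec: "sq d k (Suc t) \<le> sq d k t" for t
  proof -
    have "1 - m * sq d k t \<le> exp (- (m * sq d k t))"
      using exp_minus_greater[of "m * sq d k t"] by (cases "m * sq d k t = 0") auto
    moreover have "m * sq d k t \<le> sq d k t" using m sb[of t] by (simp add: mult_left_le_one_le)
    ultimately show ?thesis unfolding rec by linarith
  qed
  have "antimono_on UNIV (sq d k)"
    by (rule monotone_onI) (auto intro: lift_Suc_antimono_le[of "sq d k", OF dec])
  then obtain L where L: "sq d k \<longlonglongrightarrow> L" "\<forall>i. L \<le> sq d k i"
    using decseq_convergent[of "sq d k" 0] sb by blast
  have L0: "0 \<le> L" using L(1) sb by (intro LIMSEQ_le_const) auto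
  have "(\<lambda>t. sq d k (Suc t)) \<longlonglongrightarrow> L" using L(1) by (rule LIMSEQ_Suc)
  moreover have "(\<lambda>t. sq d k (Suc t)) \<longlonglongrightarrow> 1 - exp (- (m * L))"
    unfolding rec by (intro tendsto_intros L(1))
  ultimately have fixL: "L = 1 - exp (- (m * L))" by (rule LIMSEQ_unique)
  show ?thesis
  proof (cases "L = 0")
    case True then show ?thesis using L by simp
  next
    case False
    then have "m * L \<noteq> 0" using m by simp
    then have "1 - m * L < exp (- (m * L))" using exp_minus_greater by blast
    moreover have "m * L \<le> L" using m L0 by (simp add: mult_left_le_one_le)
    ultimately show ?thesis using fixL by linarith
  qed
qed

theorem mainTheorem10:
  fixes k :: nat and d :: real
  assumes "k \<ge> 2" and "d > 0" and "2 * d / real k \<le> 1"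
  shows "(\<lambda>t. Max {tv_dist (P_obs d k t x) (P_obs d k t x') | x x'. x \<in> {1..k} \<and> x' \<in> {1..k}})
           \<longlonglongrightarrow> 0"
proof (rule tendsto_sandwich[of "\<lambda>_. 0" _ _ "sq d k"])
  let ?S = "\<lambda>t. {tv_dist (P_obs d k t x) (P_obs d k t x') | x x'. x \<in> {1..k} \<and> x' \<in> {1..k}}"
  have fin: "finite (?S t)" for t
  proof -
    have "?S t = (\<lambda>(x, x'). tv_dist (P_obs d k t x) (P_obs d k t x')) ` ({1..k} \<times> {1..k})" by (auto simp: image_iff; force)
    then show ?thesis by simp
  qed
  have mem: "tv_dist (P_obs d k t 1) (P_obs d k t 1) \<in> ?S t" for t by (rule CollectI, rule exI[of _ 1], rule exI[of _ 1]) (use assms in auto)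
  show "\<forall>\<^sub>F t in sequentially. 0 \<le> Max (?S t)"
  proof (intro always_eventually allI)
    fix t
    have "0 \<le> tv_dist (P_obs d k t 1) (P_obs d k t 1)" by (rule tv_nonneg)
    also have "\<dots> \<le> Max (?S t)" by (rule Max_ge[OF fin mem])
    finally show "0 \<le> Max (?S t)" .
  qed
  show "\<forall>\<^sub>F t in sequentially. Max (?S t) \<le> sq d k t"
  proof (intro always_eventually allI)
    fix t
    show "Max (?S t) \<le> sq d k t"
    proof (rule Max.boundedI[OF fin])
      show "?S t \<noteq> {}" using mem by blast
      fix a assume "a \<in> ?S t"
      then obtain x x' where "a = tv_dist (P_obs d k t x) (P_obs d k t x')" "x \<in> {1..k}" "x' \<in> {1..k}" by blast
      then show "a \<le> sq d k t" using main_coupled[OF assms(2,1)] coupled_tv by blast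
    qed
  qed
  show "(\<lambda>_. 0) \<longlonglongrightarrow> (0::real)" by simp
  show "sq d k \<longlonglongrightarrow> 0" using sq_tendsto assms by blast
qed


end
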